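(* Let $n\in\mathbb{N}$ and $0<s_1,\dots,s_n<1$ pairwise distinct. Then $$\mathcal{E}_\mu(s_1^z,\dots,s_n^z)\cap\prod_{j=1}^n\big(s_j^{-1/2}\mathbb{T}\cup\{0\}\big)=\Big(\mathcal{E}_\mu(s_1^z,\dots,s_n^z)\cap\prod_{j=1}^n s_j^{-1/2}\mathbb{T}\Big)\cup\{(0,\dots,0)\}.$$
   Context: $\mu$ is the measure on $\Omega=\{\mathrm{Re}\,z\ge-\tfrac12\}$ given by $d\mu=\sum_{n=-1}^\infty \frac{|\Gamma(\frac n2+iy+1)|^2}{2\pi(n+1)!}\,dy\,d\delta_{n/2}(x)$; $s^z=e^{z\ln s}$; $\mathbb{T}$ the unit circle. For $\varphi_1,\dots,\varphi_n\in L^\infty(\mu)$, the joint essential range $\mathcal{E}_\mu(\varphi_1,\dots,\varphi_n)$ is the set of $\lambda\in\mathbb{C}^n$ such that for every $\varepsilon>0$, $\mu(\{z:\sum_j|\varphi_j(z)-\lambda_j|<\varepsilon\})>0$. *)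

theory Defs
  imports "HOL-Analysis.Analysis"
begin

text \<open>Density of the n-th line (indexed by k = n+1, so n = k-1 ranges over -1,0,1,...):
  |Gamma(n/2 + i y + 1)|^2 / (2 pi (n+1)!).\<close>
definition mu_weight :: "nat \<Rightarrow> real \<Rightarrow> real" where
  "mu_weight k y = (cmod (Gamma (Complex ((real k - 1) / 2 + 1) y)))\<^sup>2 / (2 * pi * fact k)"

definition mu :: "complex set \<Rightarrow> ennreal" where
  "mu A = (\<Sum>k. \<integral>\<^sup>+ y. ennreal (mu_weight k y) * indicator A (Complex ((real k - 1) / 2) y) \<partial>lborel)"

definition spow :: "real \<Rightarrow> complex \<Rightarrow> complex" where
  "spow s z = exp (z * complex_of_real (ln s))"

text \<open>Joint essential range of a list of functions w.r.t. a set function m; points of C^n are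
  lists of length n.\<close>
definition ess_range :: "(complex set \<Rightarrow> ennreal) \<Rightarrow> (complex \<Rightarrow> complex) list \<Rightarrow> complex list set" where
  "ess_range m \<phi>s = {l. length l = length \<phi>s \<and>
     (\<forall>\<epsilon>>0. m {z. (\<Sum>j<length \<phi>s. cmod ((\<phi>s ! j) z - l ! j)) < \<epsilon>} > 0)}"

end

theory Submission
  imports Defs
begin

lemma cmod_spow: "cmod (spow s z) = exp (Re z * ln s)"
  by (simp add: spow_def norm_exp_eq_Re)

lemma line_pos: "integral\<^sup>N lborel (\<lambda>y. ennreal (mu_weight k y)) > 0"
proof -
  let ?a = "(real k - 1) / 2 + 1"
  have "real k \<ge> 0" by simp
  hence a: "?a > 0" by (simp add: field_simps)
  have nz: "Gamma (Complex ?a y) \<noteq> 0" for y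
  proof (rule Gamma_nonzero)
    show "Complex ?a y \<notin> \<int>\<^sub>\<le>\<^sub>0"
    proof
      assume "Complex ?a y \<in> \<int>\<^sub>\<le>\<^sub>0"
      then obtain n where n: "Complex ?a y = of_int n" "n \<le> 0" by (auto elim!: nonpos_Ints_cases)
      hence "Re (Complex ?a y) = Re (of_int n)" by simp
      hence "?a = of_int n" by simp
      thus False using a n(2) by linarith
    qed
  qed
  have pos: "mu_weight k y > 0" for y
    using nz[of y] by (simp add: mu_weight_def)
  have cG: "continuous_on UNIV (\<lambda>y. Gamma (Complex ?a y))"
  proof (rule continuous_on_compose2[OF continuous_on_Gamma[of "{z. Re z > 0}"]])
    show "{z. Re z > 0} \<inter> \<int>\<^sub>\<le>\<^sub>0 = {}" by (auto elim!: nonpos_Ints_cases)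
    show "continuous_on UNIV (\<lambda>y. Complex ?a y)"
      unfolding Complex_eq by (intro continuous_intros)
    show "(\<lambda>y. Complex ?a y) ` UNIV \<subseteq> {z. Re z > 0}" using a by auto
  qed
  have cw: "continuous_on UNIV (mu_weight k)"
    unfolding mu_weight_def by (intro continuous_intros cG) auto
  have meas: "(\<lambda>y. ennreal (mu_weight k y)) \<in> borel_measurable lborel"
    using cw by (intro measurable_compose[OF _ measurable_ennreal] borel_measurable_continuous_onI) (simp_all add: borel_measurable_continuous_onI)
  show ?thesis
  proof (rule ccontr)
    assume "\<not> ?thesis"
    hence "integral\<^sup>N lborel (\<lambda>y. ennreal (mu_weight k y)) = 0" by (simp add: not_less)
    hence "AE y in lborel. ennreal (mu_weight k y) = 0" using nn_integral_0_iff_AE[OF meas] by simp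
    hence "AE (y::real) in lborel. False" by (rule eventually_mono) (use pos in \<open>auto simp: less_le\<close>)
    then obtain N where N: "UNIV \<subseteq> N" "emeasure (lborel :: real measure) N = 0"
      by (auto elim!: AE_E)
    hence "N = UNIV" by auto
    thus False using N by simp
  qed
qed

lemma mu_line_pos:
  assumes "\<And>y. Complex ((real k - 1) / 2) y \<in> A"
  shows "mu A > 0"
proof -
  have "integral\<^sup>N lborel (\<lambda>y. ennreal (mu_weight k y) * indicator A (Complex ((real k - 1) / 2) y))
        = integral\<^sup>N lborel (\<lambda>y. ennreal (mu_weight k y))"
    using assms by simp
  also have "\<dots> > 0" by (rule line_pos)
  finally have "0 < (\<lambda>k. \<integral>\<^sup>+ y. ennreal (mu_weight k y) * indicator A (Complex ((real k - 1) / 2) y) \<partial>lborel) k" .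
  also have "\<dots> \<le> mu A"
    unfolding mu_def by (rule sum_le_suminf[of _ "{k}", simplified]) auto
  finally show ?thesis .
qed

lemma mu_empty: "mu {} = 0"
  by (simp add: mu_def)

lemma zero_in:
  assumes "\<forall>j<length s. 0 < s ! j \<and> s ! j < 1"
  shows "replicate (length s) 0 \<in> ess_range mu (map spow s)"
proof -
  { fix e :: real assume e: "e > 0"
    define f where "f k = (\<Sum>j<length s. (s ! j) powr (-1/2) * (sqrt (s ! j)) ^ k)" for k :: nat
    have "f \<longlonglongrightarrow> (\<Sum>j<length s. (s ! j) powr (-1/2) * 0)"
      unfolding f_def
      by (intro tendsto_sum tendsto_mult tendsto_const LIMSEQ_power_zero) (use assms in auto)
    hence "f \<longlonglongrightarrow> 0" by simp
    hence "eventually (\<lambda>k. f k < e) sequentially" using e by (rule order_tendstoD(2))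
    then obtain N where "\<forall>n\<ge>N. f n < e" by (auto simp: eventually_sequentially)
    then obtain k where k: "f k < e" by blast
    have eq: "cmod (spow (s ! j) (Complex ((real k - 1) / 2) y)) = (s ! j) powr (-1/2) * (sqrt (s ! j)) ^ k"
      if "j < length s" for j y
    proof -
      have p: "s ! j > 0" using assms that by auto
      have "(sqrt (s ! j)) ^ k = (s ! j) powr (real k / 2)"
        using p by (simp add: sqrt_def root_powr_inverse powr_realpow[symmetric] powr_powr field_simps)
      thus ?thesis using p by (simp add: cmod_spow powr_def exp_add[symmetric] field_simps)
    qed
    have "mu {z. (\<Sum>j<length s. cmod ((map spow s ! j) z - replicate (length s) 0 ! j)) < e} > 0"
      by (rule mu_line_pos[of k]) (use k eq in \<open>simp add: f_def\<close>)
  }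
  thus ?thesis unfolding ess_range_def by auto
qed

lemma mixed_not:
  assumes "\<forall>j<length s. 0 < s ! j \<and> s ! j < 1"
    and "l \<in> ess_range mu (map spow s)"
    and "i < length s" "l ! i = 0" "j < length s" "cmod (l ! j) = (s ! j) powr (-1/2)"
  shows False
proof -
  have si: "0 < s ! i" "s ! i < 1" and sj: "0 < s ! j" "s ! j < 1" using assms(1,3,5) by auto
  have g1: "(s ! j) powr (-1/2) > 1"
  proof -
    have "1 powr (-1/2::real) < (s ! j) powr (-1/2)"
      by (rule powr_less_mono2_neg) (use sj in auto)
    thus ?thesis by simp
  qed
  define e where "e = min 1 ((s ! j) powr (-1/2) - 1)"
  have e: "e > 0" using g1 by (simp add: e_def)
  have e1: "e \<le> 1" and e2: "e \<le> (s ! j) powr (-1/2) - 1" unfolding e_def by auto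
  have empty: "{z. (\<Sum>k<length s. cmod ((map spow s ! k) z - l ! k)) < e} = {}"
  proof (rule ccontr)
    assume "\<not> ?thesis"
    then obtain z where z: "(\<Sum>k<length s. cmod ((map spow s ! k) z - l ! k)) < e" by auto
    have le: "cmod ((map spow s ! k) z - l ! k) \<le> (\<Sum>k<length s. cmod ((map spow s ! k) z - l ! k))"
      if "k < length s" for k
      by (rule member_le_sum) (use that in auto)
    have zi: "cmod (spow (s ! i) z) < e"
      using le[OF assms(3)] z assms(3,4) by simp
    have zj: "cmod (spow (s ! j) z - l ! j) < e"
      using le[OF assms(5)] z assms(5) by simp
    show False
    proof (cases "Re z \<le> 0")
      case True
      have "ln (s ! i) < 0" using si by simp
      hence "Re z * ln (s ! i) \<ge> 0" using True by (simp add: mult_nonpos_nonpos)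
      hence "cmod (spow (s ! i) z) \<ge> 1" by (simp add: cmod_spow)
      thus False using zi e1 by linarith
    next
      case False
      have "ln (s ! j) < 0" using sj by simp
      hence "Re z * ln (s ! j) < 0" using False by (simp add: mult_pos_neg)
      hence c: "cmod (spow (s ! j) z) < 1" by (simp add: cmod_spow)
      have "cmod (l ! j) = cmod (spow (s ! j) z - (spow (s ! j) z - l ! j))" by simp
      also have "\<dots> \<le> cmod (spow (s ! j) z) + cmod (spow (s ! j) z - l ! j)"
        by (rule norm_triangle_ineq4)
      finally have "cmod (l ! j) \<le> cmod (spow (s ! j) z - l ! j) + cmod (spow (s ! j) z)" by simp
      thus False using zj e2 c assms(6) by linarith
    qed
  qed
  have H: "\<forall>\<epsilon>>0. mu {z. (\<Sum>k<length (map spow s). cmod ((map spow s ! k) z - l ! k)) < \<epsilon>} > 0"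
    using assms(2) unfolding ess_range_def mem_Collect_eq by (elim conjE)
  have "mu {z. (\<Sum>k<length s. cmod ((map spow s ! k) z - l ! k)) < e} > 0"
    using H[rule_format, OF e] by simp
  thus False using empty mu_empty by simp
qed

theorem mainTheorem8:
  fixes s :: "real list"
  assumes "distinct s"
    and "\<forall>j<length s. 0 < s ! j \<and> s ! j < 1"
  shows "ess_range mu (map spow s) \<inter>
           {l. length l = length s \<and> (\<forall>j<length s. cmod (l ! j) = (s ! j) powr (-1/2) \<or> l ! j = 0)}
       = (ess_range mu (map spow s) \<inter>
           {l. length l = length s \<and> (\<forall>j<length s. cmod (l ! j) = (s ! j) powr (-1/2))})
         \<union> {replicate (length s) 0}"
proof (intro equalityI subsetI)
  fix l assume l: "l \<in> ess_range mu (map spow s) \<inter>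
           {l. length l = length s \<and> (\<forall>j<length s. cmod (l ! j) = (s ! j) powr (-1/2) \<or> l ! j = 0)}"
  show "l \<in> (ess_range mu (map spow s) \<inter>
           {l. length l = length s \<and> (\<forall>j<length s. cmod (l ! j) = (s ! j) powr (-1/2))})
         \<union> {replicate (length s) 0}"
  proof (cases "\<exists>i<length s. l ! i = 0")
    case True
    then obtain i where i: "i < length s" "l ! i = 0" by auto
    have "\<forall>j<length s. l ! j = 0"
      using mixed_not[OF assms(2) _ i] l by blast
    hence "l = replicate (length s) 0" using l by (intro nth_equalityI) auto
    thus ?thesis by simp
  next
    case False
    thus ?thesis using l by auto
  qed
next
  fix l assume "l \<in> (ess_range mu (map spow s) \<inter>
           {l. length l = length s \<and> (\<forall>j<length s. cmod (l ! j) = (s ! j) powr (-1/2))})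
         \<union> {replicate (length s) 0}"
  thus "l \<in> ess_range mu (map spow s) \<inter>
           {l. length l = length s \<and> (\<forall>j<length s. cmod (l ! j) = (s ! j) powr (-1/2) \<or> l ! j = 0)}"
    using zero_in[OF assms(2)] by auto
qed

end
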